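(* Let $Q$ be a convex $k$-gon in $\mathbb{R}^2$ containing the origin in its interior, with edges $e_0,\dots,e_{k-1}$. Let $p,q\in\mathbb{R}^2$ be two distinct points such that the segment $pq$ is not parallel to any edge or diagonal of $Q$. Then an edgelet $g$ with label $\psi(g)=(e_i,e_j)$ appears on the bisector $b_{pq}$ if and only if there is an oriented line parallel to $\vec{pq}$ (and oriented in the direction of $\vec{pq}$) that crosses $\partial Q$ at the relative interiors of $e_i$ and $e_j$, in this order.
   Context: A homothetic placement of $Q$ is a set $Q'=x+\lambda Q$ with $x\in\mathbb{R}^2$ (its center) and $\lambda>0$; edges of $Q'$ are identified with the corresponding edges of $Q$. For $x,y\in\mathbb{R}^2$, $d_Q(x,y)=\min\{\lambda\ge 0: y\in x+\lambda Q\}$. The bisector $b_{pq}$ is the set $\{x: d_Q(x,p)=d_Q(x,q)\}$, equivalently the locus of centers of homothetic placements of $Q$ whose boundary contains both $p$ and $q$. An edgelet of $b_{pq}$ with label $(e_i,e_j)$ is a maximal segment of $b_{pq}$ consisting of centers of placements $Q'$ for which $p$ lies in the relative interior of the edge $e_i$ of $Q'$ and $q$ lies in the relative interior of the edge $e_j$ of $Q'$. *)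

theory Defs
  imports "HOL-Analysis.Analysis"
begin

definition cross2 :: "real^2 \<Rightarrow> real^2 \<Rightarrow> real" where
  "cross2 a b = a$1 * b$2 - a$2 * b$1"

text \<open>A convex k-gon given by its vertices v 0, ..., v (k-1) in counterclockwise order:
  every vertex not on the directed edge from v i to v (i+1 mod k) lies strictly to its left.\<close>
definition convex_kgon :: "(nat \<Rightarrow> real^2) \<Rightarrow> nat \<Rightarrow> bool" where
  "convex_kgon v k \<longleftrightarrow> k \<ge> 3 \<and>
     (\<forall>i<k. \<forall>j<k. j \<noteq> i \<and> j \<noteq> Suc i mod k \<longrightarrow>
        cross2 (v (Suc i mod k) - v i) (v j - v i) > 0)"

definition polygon :: "(nat \<Rightarrow> real^2) \<Rightarrow> nat \<Rightarrow> (real^2) set" where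
  "polygon v k = convex hull (v ` {..<k})"

definition edge :: "(nat \<Rightarrow> real^2) \<Rightarrow> nat \<Rightarrow> nat \<Rightarrow> (real^2) set" where
  "edge v k i = closed_segment (v i) (v (Suc i mod k))"

definition edge_relint :: "(nat \<Rightarrow> real^2) \<Rightarrow> nat \<Rightarrow> nat \<Rightarrow> (real^2) set" where
  "edge_relint v k i = open_segment (v i) (v (Suc i mod k))"

definition placement :: "real^2 \<Rightarrow> real \<Rightarrow> (real^2) set \<Rightarrow> (real^2) set" where
  "placement x l S = (\<lambda>y. x + l *\<^sub>R y) ` S"

definition dQ :: "(real^2) set \<Rightarrow> real^2 \<Rightarrow> real^2 \<Rightarrow> real" where
  "dQ Q x y = Inf {l. l \<ge> 0 \<and> y \<in> placement x l Q}"

definition bisector :: "(real^2) set \<Rightarrow> real^2 \<Rightarrow> real^2 \<Rightarrow> (real^2) set" where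
  "bisector Q p q = {x. dQ Q x p = dQ Q x q}"

definition label_centers ::
  "(nat \<Rightarrow> real^2) \<Rightarrow> nat \<Rightarrow> real^2 \<Rightarrow> real^2 \<Rightarrow> nat \<Rightarrow> nat \<Rightarrow> (real^2) set" where
  "label_centers v k p q i j = {x. \<exists>l>0. p \<in> placement x l (edge_relint v k i) \<and>
                                          q \<in> placement x l (edge_relint v k j)}"

text \<open>A (non-degenerate, possibly open/half-open) segment: a convex subset of a line
  containing at least two points.\<close>
definition is_segment :: "(real^2) set \<Rightarrow> bool" where
  "is_segment S \<longleftrightarrow> convex S \<and> collinear S \<and> (\<exists>a b. a \<in> S \<and> b \<in> S \<and> a \<noteq> b)"

definition edgelet ::
  "(nat \<Rightarrow> real^2) \<Rightarrow> nat \<Rightarrow> real^2 \<Rightarrow> real^2 \<Rightarrow> nat \<Rightarrow> nat \<Rightarrow> (real^2) set \<Rightarrow> bool" where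
  "edgelet v k p q i j g \<longleftrightarrow>
     is_segment g \<and> g \<subseteq> bisector (polygon v k) p q \<and> g \<subseteq> label_centers v k p q i j \<and>
     (\<forall>g'. is_segment g' \<and> g \<subseteq> g' \<and> g' \<subseteq> bisector (polygon v k) p q \<and>
            g' \<subseteq> label_centers v k p q i j \<longrightarrow> g' = g)"

end

theory Submission
  imports Defs
begin


lemma cross2_add2[simp]: "cross2 a (x + y) = cross2 a x + cross2 a y"
  by (simp add: cross2_def algebra_simps)
lemma cross2_diff2[simp]: "cross2 a (x - y) = cross2 a x - cross2 a y"
  by (simp add: cross2_def algebra_simps)
lemma cross2_scale2[simp]: "cross2 a (c *\<^sub>R x) = c * cross2 a x"
  by (simp add: cross2_def algebra_simps)
lemma cross2_add1: "cross2 (x + y) a = cross2 x a + cross2 y a"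
  by (simp add: cross2_def algebra_simps)
lemma cross2_diff1: "cross2 (x - y) a = cross2 x a - cross2 y a"
  by (simp add: cross2_def algebra_simps)
lemma cross2_scale1: "cross2 (c *\<^sub>R x) a = c * cross2 x a"
  by (simp add: cross2_def algebra_simps)
lemma cross2_self[simp]: "cross2 a a = 0"
  by (simp add: cross2_def)
lemma cross2_anti: "cross2 a b = - cross2 b a"
  by (simp add: cross2_def)
lemma cross2_zero[simp]: "cross2 0 a = 0" "cross2 a 0 = 0"
  by (simp_all add: cross2_def)

lemma cross2_identity:
  "cross2 e d *\<^sub>R f - cross2 f d *\<^sub>R e = cross2 e f *\<^sub>R (d::real^2)"
  by (simp add: vec_eq_iff forall_2 cross2_def algebra_simps)

lemma open_seg_line:
  assumes "u \<in> open_segment a b"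
  shows "cross2 (b - a) u = cross2 (b - a) a"
proof -
  from assms obtain t where u: "u = (1 - t) *\<^sub>R a + t *\<^sub>R b"
    by (auto simp: in_segment)
  show ?thesis unfolding u by (simp add: cross2_def algebra_simps)
qed

lemma collinear_line:
  fixes a :: "real^2"
  assumes "a \<noteq> 0" "S \<subseteq> {x. cross2 a x = K}"
  shows "collinear S"
  unfolding collinear_def
proof (intro exI[of _ a] ballI)
  fix x y assume xy: "x \<in> S" "y \<in> S"
  then have c: "cross2 a (x - y) = 0" using assms(2) by auto
  show "\<exists>c. x - y = c *\<^sub>R a"
  proof (cases "a$1 = 0")
    case True
    then have "a$2 \<noteq> 0" using assms(1) by (auto simp: vec_eq_iff forall_2)
    then show ?thesis using c True
      by (intro exI[of _ "(x-y)$2 / a$2"]) (auto simp: vec_eq_iff forall_2 cross2_def field_simps)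
  next
    case False
    then show ?thesis using c
      by (intro exI[of _ "(x-y)$1 / a$1"]) (auto simp: vec_eq_iff forall_2 cross2_def field_simps)
  qed
qed

lemma small_eps:
  fixes a b :: real
  assumes "a > 0" shows "\<exists>E>0. \<forall>\<epsilon>. 0 < \<epsilon> \<and> \<epsilon> < E \<longrightarrow> a + \<epsilon> * b > 0"
proof (intro exI[of _ "a / (\<bar>b\<bar> + 1)"] conjI allI impI)
  show "a / (\<bar>b\<bar> + 1) > 0" using assms by simp
  fix \<epsilon> :: real assume h: "0 < \<epsilon> \<and> \<epsilon> < a / (\<bar>b\<bar> + 1)"
  then have "\<epsilon> * (\<bar>b\<bar> + 1) < a" by (simp add: field_simps)
  moreover have "- (\<epsilon> * b) \<le> \<epsilon> * \<bar>b\<bar>" using h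
    by (metis abs_ge_minus_self abs_mult abs_of_pos)
  ultimately show "a + \<epsilon> * b > 0" using h by (simp add: algebra_simps)
qed

lemma kgon_next:
  assumes "convex_kgon v k" "i < k"
  shows "Suc i mod k < k" "Suc i mod k \<noteq> i" "Suc (Suc i) mod k \<noteq> i"
        "Suc (Suc i) mod k \<noteq> Suc i mod k" "Suc (Suc i) mod k < k"
proof -
  have k: "k \<ge> 3" using assms(1) by (simp add: convex_kgon_def)
  show "Suc i mod k < k" "Suc (Suc i) mod k < k" using k by auto
  consider "Suc (Suc i) < k" | "Suc (Suc i) = k" | "Suc i = k" using assms(2) by linarith
  then have "Suc i mod k \<noteq> i \<and> Suc (Suc i) mod k \<noteq> i \<and> Suc (Suc i) mod k \<noteq> Suc i mod k"
  proof cases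
    case 1
    then have "Suc i mod k = Suc i" "Suc (Suc i) mod k = Suc (Suc i)" by simp_all
    then show ?thesis by simp
  next
    case 2
    then have "Suc i mod k = Suc i" "Suc (Suc i) mod k = 0" by simp_all
    moreover have "i \<noteq> 0" using 2 k by linarith
    ultimately show ?thesis by simp
  next
    case 3
    then have a: "Suc i mod k = 0" by simp
    have "Suc (Suc i) = k + 1" using 3 by simp
    then have "Suc (Suc i) mod k = 1" using k by (simp add: mod_Suc)
    moreover have "i \<noteq> 1" "i \<noteq> 0" using 3 k by linarith+
    ultimately show ?thesis using a by simp
  qed
  then show "Suc i mod k \<noteq> i" "Suc (Suc i) mod k \<noteq> i" "Suc (Suc i) mod k \<noteq> Suc i mod k"
    by blast+
qed

lemma poly_half:
  assumes "convex_kgon v k" "i < k" "y \<in> polygon v k"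
  shows "cross2 (v (Suc i mod k) - v i) (y - v i) \<ge> 0"
proof -
  let ?e = "v (Suc i mod k) - v i"
  let ?H = "{y. cross2 ?e (y - v i) \<ge> 0}"
  have "v ` {..<k} \<subseteq> ?H"
  proof
    fix z assume "z \<in> v ` {..<k}"
    then obtain j where j: "j < k" "z = v j" by auto
    show "z \<in> ?H"
    proof (cases "j = i \<or> j = Suc i mod k")
      case True then show ?thesis using j by (auto simp: cross2_def)
    next
      case False
      from assms(1) have H: "\<forall>i<k. \<forall>j<k. j \<noteq> i \<and> j \<noteq> Suc i mod k \<longrightarrow>
        cross2 (v (Suc i mod k) - v i) (v j - v i) > 0" by (simp add: convex_kgon_def)
      have "cross2 ?e (z - v i) > 0" using H j False assms(2) by blast
      then show ?thesis by (simp only: mem_Collect_eq less_imp_le)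
    qed
  qed
  moreover have "convex ?H"
    unfolding convex_alt
  proof (intro ballI allI impI)
    fix x y and u :: real assume "x \<in> ?H" "y \<in> ?H" "0 \<le> u \<and> u \<le> 1"
    then have "(1 - u) * cross2 ?e (x - v i) + u * cross2 ?e (y - v i) \<ge> 0" by auto
    moreover have "cross2 ?e ((1 - u) *\<^sub>R x + u *\<^sub>R y - v i) =
        (1 - u) * cross2 ?e (x - v i) + u * cross2 ?e (y - v i)"
      by (simp add: cross2_def algebra_simps)
    ultimately have "cross2 ?e ((1 - u) *\<^sub>R x + u *\<^sub>R y - v i) \<ge> 0" by linarith
    then show "(1 - u) *\<^sub>R x + u *\<^sub>R y \<in> ?H" by (simp only: mem_Collect_eq)
  qed
  ultimately have "polygon v k \<subseteq> ?H" unfolding polygon_def by (rule hull_minimal)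
  then show ?thesis using assms(3) by blast
qed

lemma c_neg:
  assumes "convex_kgon v k" "0 \<in> interior (polygon v k)" "i < k"
  shows "cross2 (v (Suc i mod k) - v i) (v i) < 0"
proof -
  define e where "e = v (Suc i mod k) - v i"
  have half: "\<And>y. y \<in> polygon v k \<Longrightarrow> cross2 e y - cross2 e (v i) \<ge> 0"
    using poly_half[OF assms(1,3)] unfolding e_def by simp
  have "cross2 e (v (Suc (Suc i) mod k) - v i) > 0"
    using assms(1,3) kgon_next[OF assms(1,3)] unfolding convex_kgon_def e_def by blast
  then have "e \<noteq> 0" by auto
  then have sq: "e$1 * e$1 + e$2 * e$2 > 0"
  proof -
    have "e$1 \<noteq> 0 \<or> e$2 \<noteq> 0" using \<open>e \<noteq> 0\<close> by (auto simp: vec_eq_iff forall_2)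
    then show ?thesis using sum_squares_gt_zero_iff by blast
  qed
  obtain r where r: "r > 0" "ball 0 r \<subseteq> polygon v k" using assms(2) mem_interior by blast
  define w :: "real^2" where "w = (\<chi> m. if m = 1 then e$2 else - e$1)"
  have w1: "w$1 = e$2" and w2: "w$2 = - e$1" by (simp_all add: w_def)
  define s where "s = r / (2 * (norm w + 1))"
  have nw: "2 * (norm w + 1) > 0" by (smt (verit) norm_ge_zero)
  have s: "s > 0" unfolding s_def using r(1) nw by (rule divide_pos_pos)
  have "norm (s *\<^sub>R w) = s * norm w" using s by simp
  also have "\<dots> < r"
  proof -
    have "s * norm w \<le> s * (norm w + 1)" using s by simp
    also have "\<dots> = r / 2"
    proof -
      have nz: "norm w + 1 \<noteq> 0" using nw by (smt (verit))
      show ?thesis unfolding s_def using nz by (simp add: field_simps)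
    qed
    finally show ?thesis using r(1) by linarith
  qed
  finally have "s *\<^sub>R w \<in> ball 0 r" by (simp add: dist_norm)
  then have "s *\<^sub>R w \<in> polygon v k" using r(2) by blast
  from half[OF this]
  have A: "s * cross2 e w - cross2 e (v i) \<ge> 0" by simp
  have B: "cross2 e w = - (e$1 * e$1 + e$2 * e$2)"
    unfolding cross2_def w1 w2 by (simp add: algebra_simps)
  have C: "s * (e$1 * e$1 + e$2 * e$2) > 0" using s sq by (rule mult_pos_pos)
  have D: "s * cross2 e w = - (s * (e$1 * e$1 + e$2 * e$2))" unfolding B by (rule mult_minus_right)
  have "cross2 e (v i) < 0" using A C D by linarith
  then show ?thesis unfolding e_def .
qed



lemma relint_in_poly:
  assumes "convex_kgon v k" "i < k" "u \<in> edge_relint v k i"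
  shows "u \<in> polygon v k"
proof -
  have k: "Suc i mod k < k" using kgon_next[OF assms(1,2)] by simp
  have "u \<in> closed_segment (v i) (v (Suc i mod k))"
    using assms(3) segment_open_subset_closed unfolding edge_relint_def by blast
  also have "\<dots> = convex hull {v i, v (Suc i mod k)}" by (rule segment_convex_hull)
  also have "\<dots> \<subseteq> convex hull (v ` {..<k})"
    by (rule hull_mono) (use assms(2) k in auto)
  finally show ?thesis unfolding polygon_def .
qed

lemma dQ_edge:
  assumes kg: "convex_kgon v k" and int: "0 \<in> interior (polygon v k)" and i: "i < k"
    and l: "l > 0" and z: "z \<in> placement x l (edge_relint v k i)"
  shows "dQ (polygon v k) x z = l"
proof -
  define e where "e = v (Suc i mod k) - v i"
  define c where "c = cross2 e (v i)"
  have c: "c < 0" using c_neg[OF kg int i] unfolding c_def e_def .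
  from z obtain u where u: "u \<in> edge_relint v k i" and zu: "z = x + l *\<^sub>R u"
    unfolding placement_def by auto
  have cu: "cross2 e u = c" using open_seg_line[of u "v i" "v (Suc i mod k)"] u
    unfolding e_def c_def edge_relint_def by simp
  show ?thesis unfolding dQ_def
  proof (rule cInf_eq_minimum)
    show "l \<in> {m. 0 \<le> m \<and> z \<in> placement x m (polygon v k)}"
      using relint_in_poly[OF kg i u] l zu unfolding placement_def by auto
  next
    fix m assume "m \<in> {m. 0 \<le> m \<and> z \<in> placement x m (polygon v k)}"
    then obtain y where m: "m \<ge> 0" and y: "y \<in> polygon v k" and zy: "z = x + m *\<^sub>R y"
      unfolding placement_def by auto
    have hy: "cross2 e y \<ge> c" using poly_half[OF kg i y] unfolding e_def c_def by simp
    have "l *\<^sub>R u = m *\<^sub>R y" using zu zy by simp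
    then have "cross2 e (l *\<^sub>R u) = cross2 e (m *\<^sub>R y)" by simp
    then have eq: "l * c = m * cross2 e y" using cu by simp
    have "m * cross2 e y \<ge> m * c" using hy m by (rule mult_left_mono)
    then have "(l - m) * c \<ge> 0" using eq by (simp add: algebra_simps)
    show "l \<le> m"
    proof (rule ccontr)
      assume "\<not> l \<le> m"
      then have "(l - m) * c < 0" using c by (simp add: mult_pos_neg)
      then show False using \<open>(l - m) * c \<ge> 0\<close> by linarith
    qed
  qed
qed

lemma lc_bisector:
  assumes kg: "convex_kgon v k" and int: "0 \<in> interior (polygon v k)" and "i < k" "j < k"
  shows "label_centers v k p q i j \<subseteq> bisector (polygon v k) p q"
proof
  fix x assume "x \<in> label_centers v k p q i j"
  then obtain l where "l > 0" "p \<in> placement x l (edge_relint v k i)"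
     "q \<in> placement x l (edge_relint v k j)" unfolding label_centers_def by auto
  then show "x \<in> bisector (polygon v k) p q" unfolding bisector_def
    using dQ_edge[OF kg int] assms by simp
qed

lemma lc_convex: "convex (label_centers v k p q i j)"
  unfolding convex_alt
proof (intro ballI allI impI)
  fix x1 x2 and t :: real
  assume x1: "x1 \<in> label_centers v k p q i j" and x2: "x2 \<in> label_centers v k p q i j"
    and t: "0 \<le> t \<and> t \<le> 1"
  from x1 obtain l1 u1 w1 where l1: "l1 > 0" and u1: "u1 \<in> edge_relint v k i"
    and w1: "w1 \<in> edge_relint v k j" and p1: "p = x1 + l1 *\<^sub>R u1" and q1: "q = x1 + l1 *\<^sub>R w1"
    unfolding label_centers_def placement_def by auto
  from x2 obtain l2 u2 w2 where l2: "l2 > 0" and u2: "u2 \<in> edge_relint v k i"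
    and w2: "w2 \<in> edge_relint v k j" and p2: "p = x2 + l2 *\<^sub>R u2" and q2: "q = x2 + l2 *\<^sub>R w2"
    unfolding label_centers_def placement_def by auto
  define L where "L = (1 - t) * l1 + t * l2"
  have L: "L > 0"
  proof (cases "t = 0")
    case True then show ?thesis using l1 by (simp add: L_def)
  next
    case False then have "t > 0" using t by simp
    then have "t * l2 > 0" using l2 by simp
    moreover have "(1 - t) * l1 \<ge> 0" using t l1 by simp
    ultimately show ?thesis unfolding L_def by linarith
  qed
  define a where "a = (1 - t) * l1 / L"
  define b where "b = t * l2 / L"
  have ab1: "a \<ge> 0" unfolding a_def using t l1 L by (intro divide_nonneg_pos mult_nonneg_nonneg) auto
  have ab2: "b \<ge> 0" unfolding b_def using t l2 L by (intro divide_nonneg_pos mult_nonneg_nonneg) auto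
  have "a + b = ((1 - t) * l1 + t * l2) / L" unfolding a_def b_def by (rule add_divide_distrib[symmetric])
  also have "\<dots> = L / L" unfolding L_def by (rule refl)
  finally have "a + b = L / L" .
  then have ab3: "a + b = 1" using L by simp
  note ab = ab1 ab2 ab3
  have La: "L * a = (1 - t) * l1" and Lb: "L * b = t * l2" using L by (simp_all add: a_def b_def)
  let ?x = "(1 - t) *\<^sub>R x1 + t *\<^sub>R x2"
  have key: "\<And>y1 y2 r. r = x1 + l1 *\<^sub>R y1 \<Longrightarrow> r = x2 + l2 *\<^sub>R y2 \<Longrightarrow>
      r = ?x + L *\<^sub>R (a *\<^sub>R y1 + b *\<^sub>R y2)"
  proof -
    fix y1 y2 r assume r1: "r = x1 + l1 *\<^sub>R y1" and r2: "r = x2 + l2 *\<^sub>R y2"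
    have "L *\<^sub>R (a *\<^sub>R y1 + b *\<^sub>R y2) = ((1 - t) * l1) *\<^sub>R y1 + (t * l2) *\<^sub>R y2"
      by (simp add: scaleR_add_right La Lb)
    also have "\<dots> = (1 - t) *\<^sub>R (l1 *\<^sub>R y1) + t *\<^sub>R (l2 *\<^sub>R y2)" by simp
    also have "\<dots> = (1 - t) *\<^sub>R (r - x1) + t *\<^sub>R (r - x2)"
    proof -
      have "l1 *\<^sub>R y1 = r - x1" "l2 *\<^sub>R y2 = r - x2" using r1 r2 by (simp_all add: algebra_simps)
      then show ?thesis by simp
    qed
    finally show "r = ?x + L *\<^sub>R (a *\<^sub>R y1 + b *\<^sub>R y2)" by (simp add: algebra_simps)
  qed
  have "a *\<^sub>R u1 + b *\<^sub>R u2 \<in> edge_relint v k i"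
    using convexD[OF _ u1 u2 ab] unfolding edge_relint_def by simp
  moreover have "a *\<^sub>R w1 + b *\<^sub>R w2 \<in> edge_relint v k j"
    using convexD[OF _ w1 w2 ab] unfolding edge_relint_def by simp
  ultimately show "?x \<in> label_centers v k p q i j"
    unfolding label_centers_def placement_def
    using key[OF p1 p2] key[OF q1 q2] L by blast
qed



lemma lc_elim:
  assumes "x \<in> label_centers v k p q i j"
  obtains l u w where "l > 0" "u \<in> edge_relint v k i" "w \<in> edge_relint v k j"
    "p = x + l *\<^sub>R u" "q = x + l *\<^sub>R w"
  using assms unfolding label_centers_def placement_def by auto

lemma lc_intro:
  assumes "l > 0" "u \<in> edge_relint v k i" "w \<in> edge_relint v k j"
    "p = x + l *\<^sub>R u" "q = x + l *\<^sub>R w"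
  shows "x \<in> label_centers v k p q i j"
  using assms unfolding label_centers_def placement_def by auto

lemma lc_collinear:
  assumes kg: "convex_kgon v k" and int: "0 \<in> interior (polygon v k)" and i: "i < k" and j: "j < k"
    and np: "cross2 (v (Suc j mod k) - v j) (q - p) \<noteq> 0"
  shows "collinear (label_centers v k p q i j)"
proof (cases "label_centers v k p q i j = {}")
  case True then show ?thesis by simp
next
  case False
  define e where "e = v (Suc i mod k) - v i"
  define f where "f = v (Suc j mod k) - v j"
  define ci where "ci = cross2 e (v i)"
  define cj where "cj = cross2 f (v j)"
  define d where "d = q - p"
  have ci: "ci < 0" using c_neg[OF kg int i] unfolding ci_def e_def .
  have cj: "cj < 0" using c_neg[OF kg int j] unfolding cj_def f_def .
  define a where "a = ci *\<^sub>R f - cj *\<^sub>R e"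
  define K where "K = ci * cross2 f q - cj * cross2 e p"
  have ca: "\<And>y. cross2 a y = ci * cross2 f y - cj * cross2 e y"
    unfolding a_def by (simp add: cross2_diff1 cross2_scale1)
  have props: "\<exists>l. cross2 e p - cross2 e x = l * ci \<and> cross2 f q - cross2 f x = l * cj"
    if xin: "x \<in> label_centers v k p q i j" for x
  proof -
    obtain l u w where l: "l > 0" and u: "u \<in> edge_relint v k i" and w: "w \<in> edge_relint v k j"
      and pu: "p = x + l *\<^sub>R u" and qw: "q = x + l *\<^sub>R w" using lc_elim[OF xin] by blast
    have cu: "cross2 e u = ci" using open_seg_line[of u] u unfolding edge_relint_def e_def ci_def by simp
    have cw: "cross2 f w = cj" using open_seg_line[of w] w unfolding edge_relint_def f_def cj_def by simp
    have "p - x = l *\<^sub>R u" "q - x = l *\<^sub>R w" using pu qw by simp_all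
    then have "cross2 e (p - x) = l * ci" "cross2 f (q - x) = l * cj"
      using cu cw by simp_all
    then show ?thesis by auto
  qed
  have sub: "label_centers v k p q i j \<subseteq> {x. cross2 a x = K}"
  proof
    fix x assume "x \<in> label_centers v k p q i j"
    then obtain l where h1: "cross2 e p - cross2 e x = l * ci" and h2: "cross2 f q - cross2 f x = l * cj"
      using props by blast
    have "cross2 e x = cross2 e p - l * ci" "cross2 f x = cross2 f q - l * cj" using h1 h2 by simp_all
    then have "cross2 a x = ci * (cross2 f q - l * cj) - cj * (cross2 e p - l * ci)" using ca by simp
    also have "\<dots> = K" unfolding K_def by (simp add: algebra_simps)
    finally show "x \<in> {x. cross2 a x = K}" by simp
  qed
  have "a \<noteq> 0"
  proof
    assume a0: "a = 0"
    from False obtain x0 where "x0 \<in> label_centers v k p q i j" by blast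
    then obtain l where h1: "cross2 e p - cross2 e x0 = l * ci" and h2: "cross2 f q - cross2 f x0 = l * cj"
      using props by blast
    have "cross2 a (q - x0) = 0" using a0 by simp
    then have "ci * cross2 f (q - x0) - cj * cross2 e (q - x0) = 0" using ca by (simp add: algebra_simps)
    moreover have "cross2 e (q - x0) = cross2 e p - cross2 e x0 + cross2 e d" unfolding d_def by simp
    moreover have "cross2 f (q - x0) = l * cj" using h2 by simp
    ultimately have "ci * (l * cj) - cj * (l * ci + cross2 e d) = 0" using h1 by simp
    then have "cj * cross2 e d = 0" by (simp add: algebra_simps)
    then have ed: "cross2 e d = 0" using cj by simp
    have "cross2 a d = 0" using a0 by simp
    then have "ci * cross2 f d - cj * cross2 e d = 0" using ca by simp
    then have "cross2 f d = 0" using ed ci by simp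
    then show False using np unfolding f_def d_def by simp
  qed
  then show ?thesis using sub by (rule collinear_line)
qed



theorem lemma1:
  fixes v :: "nat \<Rightarrow> real^2" and k :: nat and p q :: "real^2" and i j :: nat
  assumes "convex_kgon v k"
    and "0 \<in> interior (polygon v k)"
    and "p \<noteq> q"
    and "\<forall>a<k. \<forall>b<k. a \<noteq> b \<longrightarrow> cross2 (q - p) (v b - v a) \<noteq> 0"
    and "i < k" and "j < k"
  shows "(\<exists>g. edgelet v k p q i j g) \<longleftrightarrow>
         (\<exists>a s t. s < t \<and> a + s *\<^sub>R (q - p) \<in> edge_relint v k i \<and>
                           a + t *\<^sub>R (q - p) \<in> edge_relint v k j)"
proof
  assume "\<exists>g. edgelet v k p q i j g"
  then obtain g where g: "edgelet v k p q i j g" by blast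
  then obtain x where "x \<in> g" unfolding edgelet_def is_segment_def by blast
  then have "x \<in> label_centers v k p q i j" using g unfolding edgelet_def by blast
  then obtain l u w where l: "l > 0" and u: "u \<in> edge_relint v k i" and w: "w \<in> edge_relint v k j"
    and pu: "p = x + l *\<^sub>R u" and qw: "q = x + l *\<^sub>R w" by (rule lc_elim)
  have "q - p = l *\<^sub>R (w - u)" using pu qw by (simp add: algebra_simps)
  then have "(1 / l) *\<^sub>R (q - p) = w - u" using l by simp
  then have "u + (1 / l) *\<^sub>R (q - p) = w" by simp
  then show "\<exists>a s t. s < t \<and> a + s *\<^sub>R (q - p) \<in> edge_relint v k i \<and>
                           a + t *\<^sub>R (q - p) \<in> edge_relint v k j"
    using u w l by (intro exI[of _ u] exI[of _ 0] exI[of _ "1 / l"]) simp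
next
  assume "\<exists>a s t. s < t \<and> a + s *\<^sub>R (q - p) \<in> edge_relint v k i \<and>
                           a + t *\<^sub>R (q - p) \<in> edge_relint v k j"
  then obtain a0 s t where st: "s < t" and u0: "a0 + s *\<^sub>R (q - p) \<in> edge_relint v k i"
    and w0: "a0 + t *\<^sub>R (q - p) \<in> edge_relint v k j" by blast
  note kg = assms(1) and int = assms(2) and i = assms(5) and j = assms(6)
  define LC where "LC = label_centers v k p q i j"
  define d where "d = q - p"
  define A where "A = v i"
  define B where "B = v (Suc i mod k)"
  define C where "C = v j"
  define D where "D = v (Suc j mod k)"
  define e where "e = B - A"
  define f where "f = D - C"
  define ci where "ci = cross2 e A"
  have ci: "ci < 0" using c_neg[OF kg int i] unfolding ci_def e_def A_def B_def .
  have F: "cross2 f d \<noteq> 0"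
  proof -
    have "cross2 d (D - C) \<noteq> 0" using assms(4) kgon_next[OF kg j] j unfolding D_def C_def d_def by metis
    then show ?thesis unfolding f_def by (metis cross2_anti neg_0_equal_iff_equal)
  qed
  define u0 where "u0 = a0 + s *\<^sub>R d"
  define w0 where "w0 = a0 + t *\<^sub>R d"
  define \<tau> where "\<tau> = t - s"
  have tau: "\<tau> > 0" using st unfolding \<tau>_def by simp
  have wu0: "w0 - u0 = \<tau> *\<^sub>R d" unfolding w0_def u0_def \<tau>_def by (simp add: algebra_simps)
  have u0i: "u0 \<in> open_segment A B" using u0 unfolding u0_def d_def edge_relint_def A_def B_def .
  have w0j: "w0 \<in> open_segment C D" using w0 unfolding w0_def d_def edge_relint_def C_def D_def .
  obtain \<alpha> where AB: "A \<noteq> B" and \<alpha>: "0 < \<alpha>" "\<alpha> < 1" and u0a: "u0 = (1 - \<alpha>) *\<^sub>R A + \<alpha> *\<^sub>R B"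
    using u0i unfolding in_segment by blast
  obtain \<beta> where CD: "C \<noteq> D" and \<beta>: "0 < \<beta>" "\<beta> < 1" and w0b: "w0 = (1 - \<beta>) *\<^sub>R C + \<beta> *\<^sub>R D"
    using w0j unfolding in_segment by blast
  define x0 where "x0 = p - (1 / \<tau>) *\<^sub>R u0"
  have x0: "x0 \<in> LC"
  proof -
    have "q = x0 + (1 / \<tau>) *\<^sub>R w0"
    proof -
      have "(1 / \<tau>) *\<^sub>R w0 - (1 / \<tau>) *\<^sub>R u0 = (1 / \<tau>) *\<^sub>R (w0 - u0)" by (simp add: algebra_simps)
      also have "\<dots> = d" using tau wu0 by simp
      finally show ?thesis unfolding x0_def d_def by (simp add: algebra_simps)
    qed
    then show ?thesis unfolding LC_def
      by (intro lc_intro[of "1 / \<tau>" u0 _ _ _ w0]) (use tau u0 w0 in \<open>auto simp: x0_def u0_def w0_def d_def\<close>)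
  qed
  define E where "E = cross2 e d"
  define F' where "F' = cross2 f d"
  define G where "G = cross2 e f"
  obtain E1 where E1: "E1 > 0" "\<And>\<epsilon>. 0 < \<epsilon> \<and> \<epsilon> < E1 \<Longrightarrow> \<alpha> + \<epsilon> * F' > 0"
    using small_eps[of \<alpha> F'] \<alpha> by blast
  obtain E2 where E2: "E2 > 0" "\<And>\<epsilon>. 0 < \<epsilon> \<and> \<epsilon> < E2 \<Longrightarrow> (1 - \<alpha>) + \<epsilon> * (- F') > 0"
    using small_eps[of "1 - \<alpha>" "- F'"] \<alpha> by auto
  obtain E3 where E3: "E3 > 0" "\<And>\<epsilon>. 0 < \<epsilon> \<and> \<epsilon> < E3 \<Longrightarrow> \<beta> + \<epsilon> * E > 0"
    using small_eps[of \<beta> E] \<beta> by blast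
  obtain E4 where E4: "E4 > 0" "\<And>\<epsilon>. 0 < \<epsilon> \<and> \<epsilon> < E4 \<Longrightarrow> (1 - \<beta>) + \<epsilon> * (- E) > 0"
    using small_eps[of "1 - \<beta>" "- E"] \<beta> by auto
  obtain E5 where E5: "E5 > 0" "\<And>\<epsilon>. 0 < \<epsilon> \<and> \<epsilon> < E5 \<Longrightarrow> \<tau> + \<epsilon> * G > 0"
    using small_eps[of \<tau> G] tau by blast
  define \<epsilon> where "\<epsilon> = min E1 (min E2 (min E3 (min E4 E5))) / 2"
  have \<epsilon>: "0 < \<epsilon> \<and> \<epsilon> < E1" "0 < \<epsilon> \<and> \<epsilon> < E2" "0 < \<epsilon> \<and> \<epsilon> < E3" "0 < \<epsilon> \<and> \<epsilon> < E4"
      "0 < \<epsilon> \<and> \<epsilon> < E5"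
    using E1(1) E2(1) E3(1) E4(1) E5(1) unfolding \<epsilon>_def by (simp_all add: min_def)
  define \<alpha>1 where "\<alpha>1 = \<alpha> + \<epsilon> * F'"
  define \<beta>1 where "\<beta>1 = \<beta> + \<epsilon> * E"
  define \<mu> where "\<mu> = \<tau> + \<epsilon> * G"
  have a1: "0 < \<alpha>1" "\<alpha>1 < 1" using E1(2)[OF \<epsilon>(1)] E2(2)[OF \<epsilon>(2)] unfolding \<alpha>1_def by simp_all
  have b1: "0 < \<beta>1" "\<beta>1 < 1" using E3(2)[OF \<epsilon>(3)] E4(2)[OF \<epsilon>(4)] unfolding \<beta>1_def by simp_all
  have mu: "\<mu> > 0" using E5(2)[OF \<epsilon>(5)] unfolding \<mu>_def .
  define u1 where "u1 = (1 - \<alpha>1) *\<^sub>R A + \<alpha>1 *\<^sub>R B"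
  define w1 where "w1 = (1 - \<beta>1) *\<^sub>R C + \<beta>1 *\<^sub>R D"
  have u1i: "u1 \<in> open_segment A B" unfolding in_segment u1_def using AB a1 by blast
  have w1j: "w1 \<in> open_segment C D" unfolding in_segment w1_def using CD b1 by blast
  have u1e: "u1 = u0 + (\<epsilon> * F') *\<^sub>R e"
    unfolding u1_def u0a \<alpha>1_def e_def by (simp add: algebra_simps)
  have w1e: "w1 = w0 + (\<epsilon> * E) *\<^sub>R f"
    unfolding w1_def w0b \<beta>1_def f_def by (simp add: algebra_simps)
  have wu1: "w1 - u1 = \<mu> *\<^sub>R d"
  proof -
    have "w1 - u1 = (w0 - u0) + \<epsilon> *\<^sub>R (E *\<^sub>R f - F' *\<^sub>R e)"
      unfolding u1e w1e by (simp add: algebra_simps)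
    also have "E *\<^sub>R f - F' *\<^sub>R e = G *\<^sub>R d"
      unfolding E_def F'_def G_def by (rule cross2_identity)
    finally show ?thesis unfolding wu0 \<mu>_def by (simp add: algebra_simps)
  qed
  define x1 where "x1 = p - (1 / \<mu>) *\<^sub>R u1"
  have x1: "x1 \<in> LC"
  proof -
    have "q = x1 + (1 / \<mu>) *\<^sub>R w1"
    proof -
      have "(1 / \<mu>) *\<^sub>R w1 - (1 / \<mu>) *\<^sub>R u1 = (1 / \<mu>) *\<^sub>R (w1 - u1)" by (simp add: algebra_simps)
      also have "\<dots> = d" using mu wu1 by simp
      finally show ?thesis unfolding x1_def d_def by (simp add: algebra_simps)
    qed
    moreover have "u1 \<in> edge_relint v k i" using u1i unfolding edge_relint_def A_def B_def .
    moreover have "w1 \<in> edge_relint v k j" using w1j unfolding edge_relint_def C_def D_def .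
    ultimately show ?thesis unfolding LC_def
      by (intro lc_intro[of "1 / \<mu>" u1 _ _ _ w1]) (use mu in \<open>auto simp: x1_def\<close>)
  qed
  have x01: "x0 \<noteq> x1"
  proof
    assume "x0 = x1"
    then have eq: "(1 / \<tau>) *\<^sub>R u0 = (1 / \<mu>) *\<^sub>R u1" unfolding x0_def x1_def by simp
    have cu0: "cross2 e u0 = ci" using open_seg_line[OF u0i] unfolding e_def ci_def .
    have cu1: "cross2 e u1 = ci" using open_seg_line[OF u1i] unfolding e_def ci_def .
    have "cross2 e ((1 / \<tau>) *\<^sub>R u0) = cross2 e ((1 / \<mu>) *\<^sub>R u1)" using eq by simp
    then have "ci / \<tau> = ci / \<mu>" using cu0 cu1 by simp
    then have "\<tau> = \<mu>" using ci tau mu by (simp add: field_simps)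
    then have "u0 = u1" using eq tau by simp
    then have "(\<epsilon> * F') *\<^sub>R e = 0" using u1e by simp
    moreover have "e \<noteq> 0" using AB unfolding e_def by simp
    moreover have "\<epsilon> * F' \<noteq> 0" using \<epsilon>(1) F unfolding F'_def by simp
    ultimately show False by simp
  qed
  have seg: "is_segment LC"
    unfolding is_segment_def LC_def
    using lc_convex lc_collinear[OF kg int i j] x0 x1 x01 F
    unfolding LC_def f_def D_def C_def d_def by blast
  have "edgelet v k p q i j LC"
    unfolding edgelet_def using seg lc_bisector[OF kg int i j] unfolding LC_def by blast
  then show "\<exists>g. edgelet v k p q i j g" by blast
qed


end
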